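(* Let $f:\mathbb{R}^{2}\to\mathbb{R}$ be smooth and either quasi normal or quasi split normal. Then for all $x,y\in\mathbb{R}$ and all $k_{1}\neq0$, $k_{2}\neq0$, the limits $F(k_{1},y)=\lim_{r\to\infty}\int_{-r}^{r}f(x,y)e^{-ik_{1}x}\,dx$ and $G(x,k_{2})=\lim_{r\to\infty}\int_{-r}^{r}f(x,y)e^{-ik_{2}y}\,dy$ both exist, and $y\mapsto F(k_{1},y)$ and $x\mapsto G(x,k_{2})$ are of moderate decrease (bounded by a constant times $|y|^{-2}$, resp. $|x|^{-2}$, for $|y|>1$, resp. $|x|>1$).
   Context: One-variable notions: a smooth $g:\mathbb{R}\setminus V\to\mathbb{R}$, $V\subset\mathbb{R}$ bounded closed, is analytic at infinity if there exist $\epsilon_{1},\epsilon_{2}>0$ such that $g(1/t)=\sum_{n\geq1}a_{n}t^{n}$ for $0<t<\epsilon_{1}$ and $g(1/t)=\sum_{n\geq1}b_{n}t^{n}$ for $-\epsilon_{2}<t<0$, with real coefficients and both power series absolutely convergent on the respective intervals. Two-variable notions: let $f:\mathbb{R}^{2}\setminus W\to\mathbb{R}$ be smooth with $W$ closed and bounded (here $W=\emptyset$). $f$ is of very moderate decrease if there is $C>0$ with $|f(x,y)|\leq\frac{C}{|(x,y)|}$ for $|(x,y)|>1$, and of moderate decrease if $|f(x,y)|\leq\frac{C}{|(x,y)|^{2}}$ for $|(x,y)|>1$. For fixed $x$ write $f_{x}(y)=f(x,y)$ and for fixed $y$ write $f_{y}(x)=f(x,y)$. Conditions: (i) for every $x$,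 $f_{x}$ is analytic at infinity; (ii) for every $y$, $f_{y}$ is analytic at infinity; (iii) $f$ is of very moderate decrease; (iv) $\frac{\partial f}{\partial x}$ and $\frac{\partial f}{\partial y}$ are of moderate decrease. $f$ is quasi normal if (i)–(iv) hold and (v)': for sufficiently large $x$, the zeros of $f_{x}$ are contained in a union $(-M_{x},-N_{x})\cup(N_{x},M_{x})$ of bounded intervals with $M_{x}-N_{x}$ uniformly bounded in $x$, and similarly for $(f_{x})'$, $(f_{x})''$ (each with its own such intervals), and for $f_{y},(f_{y})',(f_{y})''$ with sufficiently large $y$. $f$ is quasi split normal if (i)–(iv) hold and (v)'': for sufficiently large $(x,y)$, $f=f_{1}+f_{2}$ with $f_{1},f_{2}$ quasi normal and $f,f_{1},f_{2}$ smooth. *)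

theory Defs
  imports "HOL-Analysis.Analysis"
begin

text \<open>Functions on R^2 are modelled as functions on real \<times> real; norm (x,y) = sqrt(x^2+y^2).\<close>

fun Ck_on :: "nat \<Rightarrow> (real \<times> real) set \<Rightarrow> (real \<times> real \<Rightarrow> real) \<Rightarrow> bool" where
  "Ck_on 0 S f \<longleftrightarrow> continuous_on S f"
| "Ck_on (Suc n) S f \<longleftrightarrow>
     (\<exists>f'. (\<forall>p\<in>S. (f has_derivative f' p) (at p))
          \<and> Ck_on n S (\<lambda>p. f' p (1,0)) \<and> Ck_on n S (\<lambda>p. f' p (0,1)))"

definition smooth2 :: "(real \<times> real \<Rightarrow> real) \<Rightarrow> bool" where
  "smooth2 f \<longleftrightarrow> (\<forall>n. Ck_on n UNIV f)"

definition analytic_at_infinity :: "(real \<Rightarrow> real) \<Rightarrow> bool" where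
  "analytic_at_infinity g \<longleftrightarrow>
     (\<exists>\<epsilon>1 \<epsilon>2 a b. \<epsilon>1 > 0 \<and> \<epsilon>2 > 0 \<and> a 0 = 0 \<and> b 0 = 0 \<and>
        (\<forall>t. 0 < t \<and> t < \<epsilon>1 \<longrightarrow>
            summable (\<lambda>n. \<bar>a n * t ^ n\<bar>) \<and> g (1 / t) = (\<Sum>n. a n * t ^ n)) \<and>
        (\<forall>t. - \<epsilon>2 < t \<and> t < 0 \<longrightarrow>
            summable (\<lambda>n. \<bar>b n * t ^ n\<bar>) \<and> g (1 / t) = (\<Sum>n. b n * t ^ n)))"

definition very_moderate_decrease :: "(real \<times> real \<Rightarrow> real) \<Rightarrow> bool" where
  "very_moderate_decrease f \<longleftrightarrow> (\<exists>C>0. \<forall>p. norm p > 1 \<longrightarrow> \<bar>f p\<bar> \<le> C / norm p)"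

definition moderate_decrease :: "(real \<times> real \<Rightarrow> real) \<Rightarrow> bool" where
  "moderate_decrease f \<longleftrightarrow> (\<exists>C>0. \<forall>p. norm p > 1 \<longrightarrow> \<bar>f p\<bar> \<le> C / (norm p)\<^sup>2)"

definition partial_x :: "(real \<times> real \<Rightarrow> real) \<Rightarrow> real \<times> real \<Rightarrow> real" where
  "partial_x f p = deriv (\<lambda>x. f (x, snd p)) (fst p)"

definition partial_y :: "(real \<times> real \<Rightarrow> real) \<Rightarrow> real \<times> real \<Rightarrow> real" where
  "partial_y f p = deriv (\<lambda>y. f (fst p, y)) (snd p)"

definition conds_i_to_iv :: "(real \<times> real \<Rightarrow> real) \<Rightarrow> bool" where
  "conds_i_to_iv f \<longleftrightarrow>
     (\<forall>x. analytic_at_infinity (\<lambda>y. f (x, y))) \<and>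
     (\<forall>y. analytic_at_infinity (\<lambda>x. f (x, y))) \<and>
     very_moderate_decrease f \<and>
     moderate_decrease (partial_x f) \<and> moderate_decrease (partial_y f)"

definition zeros_in_shells :: "(real \<Rightarrow> real \<Rightarrow> real) \<Rightarrow> bool" where
  "zeros_in_shells h \<longleftrightarrow>
     (\<exists>R B. \<forall>s. \<bar>s\<bar> > R \<longrightarrow>
        (\<exists>M N. M - N \<le> B \<and> {t. h s t = 0} \<subseteq> {- M<..<- N} \<union> {N<..<M}))"

definition quasi_normal :: "(real \<times> real \<Rightarrow> real) \<Rightarrow> bool" where
  "quasi_normal f \<longleftrightarrow> conds_i_to_iv f \<and>
     zeros_in_shells (\<lambda>x y. f (x, y)) \<and>
     zeros_in_shells (\<lambda>x. deriv (\<lambda>y. f (x, y))) \<and>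
     zeros_in_shells (\<lambda>x. deriv (deriv (\<lambda>y. f (x, y)))) \<and>
     zeros_in_shells (\<lambda>y x. f (x, y)) \<and>
     zeros_in_shells (\<lambda>y. deriv (\<lambda>x. f (x, y))) \<and>
     zeros_in_shells (\<lambda>y. deriv (deriv (\<lambda>x. f (x, y))))"

definition quasi_split_normal :: "(real \<times> real \<Rightarrow> real) \<Rightarrow> bool" where
  "quasi_split_normal f \<longleftrightarrow> conds_i_to_iv f \<and>
     (\<exists>R f1 f2. smooth2 f1 \<and> smooth2 f2 \<and> quasi_normal f1 \<and> quasi_normal f2 \<and>
        (\<forall>p. norm p > R \<longrightarrow> f p = f1 p + f2 p))"

definition FT_x :: "(real \<times> real \<Rightarrow> real) \<Rightarrow> real \<Rightarrow> real \<Rightarrow> complex" where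
  "FT_x f k y = Lim at_top (\<lambda>r. integral {-r..r} (\<lambda>x. complex_of_real (f (x, y)) * exp (- \<i> * of_real k * of_real x)))"

definition FT_y :: "(real \<times> real \<Rightarrow> real) \<Rightarrow> real \<Rightarrow> real \<Rightarrow> complex" where
  "FT_y f x k = Lim at_top (\<lambda>r. integral {-r..r} (\<lambda>y. complex_of_real (f (x, y)) * exp (- \<i> * of_real k * of_real y)))"

end

theory Submission
  imports Defs
begin

definition E :: "real \<Rightarrow> real \<Rightarrow> complex" where
  "E k x = exp (- \<i> * of_real k * of_real x)"

lemma norm_E [simp]: "cmod (E k x) = 1"
  unfolding E_def by (simp add: norm_exp_eq_Re)

lemma E_deriv: "(E k has_vector_derivative (- \<i> * of_real k) * E k x) (at x within S)"
proof -
  have "((\<lambda>z. exp (- \<i> * of_real k * z)) has_field_derivative (- \<i> * of_real k) * exp (- \<i> * of_real k * of_real x)) (at (of_real x))"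
    by (auto intro!: derivative_eq_intros)
  note h = has_vector_derivative_real_field[OF this, of S]
  have e: "E k = (\<lambda>x. exp (- \<i> * of_real k * of_real x))" by (rule ext) (simp add: E_def)
  from h show ?thesis
    unfolding e by simp
qed

lemma continuous_E [continuous_intros]: "continuous_on S (E k)"
  unfolding E_def by (intro continuous_intros)

lemma ibp:
  fixes g g' :: "real \<Rightarrow> real"
  assumes ab: "a \<le> b" and d: "\<And>x. x \<in> {a..b} \<Longrightarrow> (g has_real_derivative g' x) (at x)"
    and c: "continuous_on {a..b} g'" and k: "k \<noteq> 0"
  shows "integral {a..b} (\<lambda>x. of_real (g x) * E k x) =
     of_real (g a) * E k a / (\<i> * of_real k) - of_real (g b) * E k b / (\<i> * of_real k)
     + integral {a..b} (\<lambda>x. of_real (g' x) * E k x) / (\<i> * of_real k)"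
proof -
  define U where "U x = of_real (g x) * E k x / (\<i> * of_real k)" for x
  have kk: "(\<i> * of_real k :: complex) \<noteq> 0" using k by simp
  have der: "(U has_vector_derivative (of_real (g' x) * E k x / (\<i> * of_real k) - of_real (g x) * E k x)) (at x within {a..b})"
    if "x \<in> {a..b}" for x
  proof -
    have 1: "(g has_real_derivative g' x) (at x within {a..b})"
      using d[OF that] by (rule DERIV_subset) auto
    have "((\<lambda>x. of_real (g x) * E k x) has_vector_derivative
        (of_real (g x) * ((- \<i> * of_real k) * E k x) + of_real (g' x) * E k x)) (at x within {a..b})"
      by (intro has_vector_derivative_mult has_vector_derivative_of_real 1 E_deriv)
    then have "(U has_vector_derivative
        (of_real (g x) * ((- \<i> * of_real k) * E k x) + of_real (g' x) * E k x) / (\<i> * of_real k)) (at x within {a..b})"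
      unfolding U_def by (intro has_vector_derivative_divide) 
    moreover have "(of_real (g x) * ((- \<i> * of_real k) * E k x) + of_real (g' x) * E k x) / (\<i> * of_real k)
       = of_real (g' x) * E k x / (\<i> * of_real k) - of_real (g x) * E k x"
      using kk by (simp add: field_simps)
    ultimately show ?thesis by simp
  qed
  have "((\<lambda>x. of_real (g' x) * E k x / (\<i> * of_real k) - of_real (g x) * E k x) has_integral (U b - U a)) {a..b}"
    by (rule fundamental_theorem_of_calculus[OF ab der])
  moreover have cg: "continuous_on {a..b} g"
    using d by (meson DERIV_isCont continuous_at_imp_continuous_on)
  have i1: "(\<lambda>x. of_real (g x) * E k x) integrable_on {a..b}"
    by (intro integrable_continuous_interval continuous_intros cg)
  have i2: "(\<lambda>x. of_real (g' x) * E k x / (\<i> * of_real k)) integrable_on {a..b}"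
    using kk by (intro integrable_continuous_interval continuous_intros c) auto
  ultimately have "integral {a..b} (\<lambda>x. of_real (g' x) * E k x / (\<i> * of_real k)) - integral {a..b} (\<lambda>x. of_real (g x) * E k x) = U b - U a"
    using integral_diff[OF i2 i1] by (simp add: integral_unique)
  moreover have "integral {a..b} (\<lambda>x. of_real (g' x) * E k x / (\<i> * of_real k)) = integral {a..b} (\<lambda>x. of_real (g' x) * E k x) / (\<i> * of_real k)"
    by (rule integral_divide)
  ultimately show ?thesis unfolding U_def by (simp add: algebra_simps)
qed

lemma const_sign:
  fixes h :: "real \<Rightarrow> real"
  assumes "connected S" "continuous_on S h" "\<forall>x\<in>S. h x \<noteq> 0"
  shows "(\<forall>x\<in>S. h x > 0) \<or> (\<forall>x\<in>S. h x < 0)"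
proof (rule ccontr)
  assume "\<not> ?thesis"
  then obtain x1 x2 where x: "x1 \<in> S" "x2 \<in> S" "h x1 \<le> 0" "h x2 \<ge> 0" by (auto simp: not_less)
  then have "h x1 < 0" "h x2 > 0" using assms(3) by (auto simp: order.order_iff_strict)
  have "connected (h ` S)" by (rule connected_continuous_image[OF assms(2,1)])
  then have "is_interval (h ` S)" by (simp add: is_interval_connected_1)
  moreover have "h x1 \<in> h ` S" "h x2 \<in> h ` S" using x by auto
  ultimately have "0 \<in> h ` S" using \<open>h x1 < 0\<close> \<open>h x2 > 0\<close>
    unfolding is_interval_1 by (meson less_imp_le)
  then show False using assms(3) by auto
qed

lemma int_deriv_real:
  fixes g g' :: "real \<Rightarrow> real"
  assumes "a \<le> b" "\<And>x. x \<in> {a..b} \<Longrightarrow> (g has_real_derivative g' x) (at x)"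
  shows "integral {a..b} g' = g b - g a"
proof -
  have "(g' has_integral (g b - g a)) {a..b}"
    apply (rule fundamental_theorem_of_calculus[OF assms(1)])
    using assms(2) by (metis DERIV_subset has_real_derivative_iff_has_vector_derivative subset_UNIV)
  then show ?thesis by (rule integral_unique)
qed

lemma piece_mono:
  fixes g' g'' :: "real \<Rightarrow> real"
  assumes ab: "a \<le> b"
    and d2: "\<And>x. x \<in> {a..b} \<Longrightarrow> (g' has_real_derivative g'' x) (at x)"
    and c2: "continuous_on {a..b} g''"
    and nz: "\<forall>x\<in>{a<..<b}. g'' x \<noteq> 0"
    and S: "\<And>x. x \<in> {a..b} \<Longrightarrow> \<bar>g' x\<bar> \<le> S"
    and k: "k \<noteq> 0"
  shows "cmod (integral {a..b} (\<lambda>x. of_real (g' x) * E k x)) \<le> 4 * S / \<bar>k\<bar>"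
proof -
  have S0: "S \<ge> 0" using S[of a] ab by auto
  have I: "cmod (integral {a..b} (\<lambda>x. of_real (g'' x) * E k x)) \<le> 2 * S"
  proof (cases "a = b")
    case True then show ?thesis using S0 by simp
  next
    case False
    then have ab': "a < b" using ab by auto
    have cl: "closure {a<..<b} = {a..b}" using ab' by simp
    have iE: "(\<lambda>x. of_real (g'' x) * E k x) integrable_on {a..b}"
      by (intro integrable_continuous_interval continuous_intros c2)
    have ig: "g'' integrable_on {a..b}" by (intro integrable_continuous_interval c2)
    have "continuous_on {a<..<b} g''" using c2 by (rule continuous_on_subset) auto
    from const_sign[OF _ this nz] have "(\<forall>x\<in>{a<..<b}. g'' x > 0) \<or> (\<forall>x\<in>{a<..<b}. g'' x < 0)"
      by simp
    then show ?thesis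
    proof
      assume pos: "\<forall>x\<in>{a<..<b}. g'' x > 0"
      have ge: "g'' x \<ge> 0" if "x \<in> {a..b}" for x
      proof -
        have "\<And>y. y \<in> {a<..<b} \<Longrightarrow> g'' y \<ge> 0" using pos by (simp add: less_imp_le)
        then show ?thesis using continuous_ge_on_closure[of "{a<..<b}" g'' x 0] c2 that cl by simp
      qed
      have "cmod (integral {a..b} (\<lambda>x. of_real (g'' x) * E k x)) \<le> integral {a..b} g''"
        by (rule integral_norm_bound_integral[OF iE ig]) (simp add: norm_mult ge)
      also have "\<dots> = g' b - g' a" by (rule int_deriv_real[OF ab d2])
      also have "\<dots> \<le> 2 * S" using S[of a] S[of b] ab by auto
      finally show ?thesis .
    next
      assume neg: "\<forall>x\<in>{a<..<b}. g'' x < 0"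
      have ge: "- g'' x \<ge> 0" if "x \<in> {a..b}" for x
      proof -
        have "\<And>y. y \<in> {a<..<b} \<Longrightarrow> - g'' y \<ge> 0" using neg by (simp add: less_imp_le)
        moreover have "continuous_on {a..b} (\<lambda>x. - g'' x)" using c2 by (intro continuous_intros)
        ultimately show ?thesis using continuous_ge_on_closure[of "{a<..<b}" "\<lambda>x. - g'' x" x 0] that cl by simp
      qed
      have ig': "(\<lambda>x. - g'' x) integrable_on {a..b}" using ig by (rule integrable_neg)
      have "cmod (integral {a..b} (\<lambda>x. of_real (g'' x) * E k x)) \<le> integral {a..b} (\<lambda>x. - g'' x)"
        by (rule integral_norm_bound_integral[OF iE ig']) (use ge in \<open>force simp: norm_mult\<close>)
      also have "\<dots> = - (g' b - g' a)" using int_deriv_real[OF ab d2] by (simp add: integral_neg)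
      also have "\<dots> \<le> 2 * S" using S[of a] S[of b] ab by auto
      finally show ?thesis .
    qed
  qed
  have eq: "integral {a..b} (\<lambda>x. of_real (g' x) * E k x) =
     of_real (g' a) * E k a / (\<i> * of_real k) - of_real (g' b) * E k b / (\<i> * of_real k)
     + integral {a..b} (\<lambda>x. of_real (g'' x) * E k x) / (\<i> * of_real k)"
    by (rule ibp[OF ab d2 c2 k])
  have nk: "cmod (\<i> * of_real k) = \<bar>k\<bar>" by (simp add: norm_mult)
  have "cmod (integral {a..b} (\<lambda>x. of_real (g' x) * E k x)) \<le>
     cmod (of_real (g' a) * E k a / (\<i> * of_real k)) + cmod (of_real (g' b) * E k b / (\<i> * of_real k))
     + cmod (integral {a..b} (\<lambda>x. of_real (g'' x) * E k x) / (\<i> * of_real k))"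
    unfolding eq by (rule order.trans[OF norm_triangle_ineq add_right_mono[OF norm_triangle_ineq4]])
  also have "\<dots> = \<bar>g' a\<bar> / \<bar>k\<bar> + \<bar>g' b\<bar> / \<bar>k\<bar> + cmod (integral {a..b} (\<lambda>x. of_real (g'' x) * E k x)) / \<bar>k\<bar>"
    by (simp add: norm_divide norm_mult nk)
  also have "\<dots> \<le> S / \<bar>k\<bar> + S / \<bar>k\<bar> + 2 * S / \<bar>k\<bar>"
    using S[of a] S[of b] ab I k by (intro add_mono divide_right_mono) auto
  also have "\<dots> = 4 * S / \<bar>k\<bar>" by (simp add: field_simps)
  finally show ?thesis .
qed

lemma piece_short:
  fixes h :: "real \<Rightarrow> real"
  assumes ab: "a \<le> b" "b - a \<le> B" and c: "continuous_on {a..b} h"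
    and S: "\<And>x. x \<in> {a..b} \<Longrightarrow> \<bar>h x\<bar> \<le> S"
  shows "cmod (integral {a..b} (\<lambda>x. of_real (h x) * E k x)) \<le> B * S"
proof -
  have S0: "S \<ge> 0" using S[of a] ab by auto
  have iE: "(\<lambda>x. of_real (h x) * E k x) integrable_on {a..b}"
    by (intro integrable_continuous_interval continuous_intros c)
  have "cmod (integral {a..b} (\<lambda>x. of_real (h x) * E k x)) \<le> integral {a..b} (\<lambda>x. S)"
    by (rule integral_norm_bound_integral[OF iE]) (auto simp: norm_mult S)
  also have "\<dots> = (b - a) * S" using ab by simp
  also have "\<dots> \<le> B * S" using ab S0 by (intro mult_right_mono) auto
  finally show ?thesis .
qed

lemma inv_sq_bound:
  fixes \<phi> :: "real \<Rightarrow> complex"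
  assumes ab: "a \<le> b" and z: "0 < a \<or> b < 0" and c: "continuous_on {a..b} \<phi>"
    and bd: "\<And>x. x \<in> {a..b} \<Longrightarrow> cmod (\<phi> x) \<le> C / x\<^sup>2"
  shows "cmod (integral {a..b} \<phi>) \<le> C * (1 / a - 1 / b)"
proof -
  have nz: "x \<noteq> 0" if "x \<in> {a..b}" for x using z that by auto
  have der: "((\<lambda>x. - C / x) has_real_derivative C / x\<^sup>2) (at x)" if "x \<in> {a..b}" for x
    using nz[OF that] by (auto intro!: derivative_eq_intros simp: power2_eq_square)
  have cC: "continuous_on {a..b} (\<lambda>x. C / x\<^sup>2)"
    by (intro continuous_intros) (use nz in auto)
  have "cmod (integral {a..b} \<phi>) \<le> integral {a..b} (\<lambda>x. C / x\<^sup>2)"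
    by (rule integral_norm_bound_integral[OF integrable_continuous_interval[OF c]
          integrable_continuous_interval[OF cC] bd])
  also have "\<dots> = - C / b - - C / a" by (rule int_deriv_real[OF ab der])
  also have "\<dots> = C * (1 / a - 1 / b)" by (simp add: field_simps)
  finally show ?thesis .
qed

lemma conv_cauchy:
  fixes \<Phi> :: "real \<Rightarrow> complex"
  assumes "\<And>e. e > 0 \<Longrightarrow> \<exists>R. \<forall>r s. R \<le> r \<longrightarrow> R \<le> s \<longrightarrow> dist (\<Phi> r) (\<Phi> s) < e"
  shows "\<exists>L. (\<Phi> \<longlongrightarrow> L) at_top"
proof -
  have "cauchy_filter (filtermap \<Phi> at_top)"
    unfolding cauchy_filter_metric_filtermap
  proof (intro allI impI)
    fix e :: real assume "e > 0"
    then obtain R where R: "\<forall>r s. R \<le> r \<longrightarrow> R \<le> s \<longrightarrow> dist (\<Phi> r) (\<Phi> s) < e" using assms by blast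
    show "\<exists>P. eventually P at_top \<and> (\<forall>x y. P x \<and> P y \<longrightarrow> dist (\<Phi> x) (\<Phi> y) < e)"
      by (rule exI[of _ "\<lambda>r. R \<le> r"]) (use R in \<open>auto intro: eventually_ge_at_top\<close>)
  qed
  then have "convergent_filter (filtermap \<Phi> at_top)" by (rule cauchy_filter_convergent)
  then show ?thesis unfolding convergent_filter_iff filterlim_def by blast
qed

lemma slice_main:
  fixes g g' :: "real \<Rightarrow> real"
  assumes d: "\<And>x. (g has_real_derivative g' x) (at x)" and c: "continuous_on UNIV g'"
    and g0: "(g \<longlongrightarrow> 0) at_top" "((\<lambda>r. g (-r)) \<longlongrightarrow> 0) at_top"
    and bd: "\<And>x. \<bar>x\<bar> \<ge> 2 \<Longrightarrow> \<bar>g' x\<bar> \<le> C / x\<^sup>2"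
    and k: "k \<noteq> 0"
  shows "\<exists>L. ((\<lambda>r. integral {-r..r} (\<lambda>x. of_real (g x) * E k x)) \<longlongrightarrow> L) at_top \<and>
     (\<forall>K. eventually (\<lambda>r. cmod (integral {-r..r} (\<lambda>x. of_real (g' x) * E k x)) \<le> K) at_top
          \<longrightarrow> cmod L \<le> K / \<bar>k\<bar>)"
proof -
  define \<Phi> where "\<Phi> r = integral {-r..r} (\<lambda>x. of_real (g' x) * E k x)" for r
  have C0: "C \<ge> 0" using bd[of 2] by auto
  have cg': "continuous_on S g'" for S using c by (rule continuous_on_subset) auto
  have int: "(\<lambda>x. of_real (g' x) * E k x) integrable_on {a..b}" for a b
    by (intro integrable_continuous_interval continuous_intros cg')
  have bd': "cmod (of_real (g' x) * E k x) \<le> C / x\<^sup>2" if "\<bar>x\<bar> \<ge> 2" for x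
    using bd[OF that] by (simp add: norm_mult)
  have diff: "cmod (\<Phi> s - \<Phi> r) \<le> 2 * C / r" if r: "2 \<le> r" "r \<le> s" for r s
  proof -
    have "\<Phi> s = integral {-s..-r} (\<lambda>x. of_real (g' x) * E k x) + integral {-r..s} (\<lambda>x. of_real (g' x) * E k x)"
      unfolding \<Phi>_def using r Henstock_Kurzweil_Integration.integral_combine[where a="-s" and c="-r" and b=s, OF _ _ int] by auto
    moreover have "integral {-r..s} (\<lambda>x. of_real (g' x) * E k x) = \<Phi> r + integral {r..s} (\<lambda>x. of_real (g' x) * E k x)"
      unfolding \<Phi>_def using r Henstock_Kurzweil_Integration.integral_combine[where a="-r" and c=r and b=s, OF _ _ int] by auto
    ultimately have eq: "\<Phi> s - \<Phi> r = integral {-s..-r} (\<lambda>x. of_real (g' x) * E k x) + integral {r..s} (\<lambda>x. of_real (g' x) * E k x)"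
      by simp
    have b1: "cmod (integral {-s..-r} (\<lambda>x. of_real (g' x) * E k x)) \<le> C * (1 / (-s) - 1 / (-r))"
      using r by (intro inv_sq_bound continuous_intros cg' bd') auto
    have b2: "cmod (integral {r..s} (\<lambda>x. of_real (g' x) * E k x)) \<le> C * (1 / r - 1 / s)"
      using r by (intro inv_sq_bound continuous_intros cg' bd') auto
    have "cmod (\<Phi> s - \<Phi> r) \<le> C * (1 / (-s) - 1 / (-r)) + C * (1 / r - 1 / s)"
      unfolding eq by (rule order.trans[OF norm_triangle_ineq add_mono[OF b1 b2]])
    also have "\<dots> = 2 * C * (1 / r - 1 / s)" by (simp add: algebra_simps)
    also have "\<dots> \<le> 2 * C * (1 / r)" using r C0 by (intro mult_left_mono) auto
    finally show ?thesis by simp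
  qed
  have "\<exists>L. (\<Phi> \<longlongrightarrow> L) at_top"
  proof (rule conv_cauchy)
    fix e :: real assume e: "e > 0"
    show "\<exists>R. \<forall>r s. R \<le> r \<longrightarrow> R \<le> s \<longrightarrow> dist (\<Phi> r) (\<Phi> s) < e"
    proof (rule exI[of _ "2 * C / e + 2"], intro allI impI)
      fix r s assume rs: "2 * C / e + 2 \<le> r" "2 * C / e + 2 \<le> s"
      have "0 \<le> 2 * C / e" using C0 e by simp
      then have r1: "2 \<le> r" "2 \<le> s" using rs by linarith+
      have "2 * C / e < r" using rs by linarith
      then have lt: "2 * C / r < e" using e r1 by (simp add: divide_less_eq mult.commute)
      have "2 * C / e < s" using rs by linarith
      then have lt2: "2 * C / s < e" using e r1 by (simp add: divide_less_eq mult.commute)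
      show "dist (\<Phi> r) (\<Phi> s) < e"
      proof (cases "r \<le> s")
        case True
        then show ?thesis using diff[OF r1(1) True] lt by (metis dist_commute dist_norm le_less_trans)
      next
        case False
        then show ?thesis using diff[OF r1(2), of r] lt2 by (metis dist_norm le_less_trans nle_le)
      qed
    qed
  qed
  then obtain L' where L': "(\<Phi> \<longlongrightarrow> L') at_top" by blast
  define U where "U x = of_real (g x) * E k x / (\<i> * of_real k)" for x
  have nU: "cmod (U x) = \<bar>g x\<bar> / \<bar>k\<bar>" for x by (simp add: U_def norm_divide norm_mult)
  have U1: "((\<lambda>r. U r) \<longlongrightarrow> 0) at_top"
    by (rule tendsto_norm_zero_iff[THEN iffD1], unfold nU) (intro tendsto_divide_zero tendsto_rabs_zero g0)
  have U2: "((\<lambda>r. U (-r)) \<longlongrightarrow> 0) at_top"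
    by (rule tendsto_norm_zero_iff[THEN iffD1], unfold nU) (intro tendsto_divide_zero tendsto_rabs_zero g0)
  have lim: "((\<lambda>r. U (-r) - U r + \<Phi> r / (\<i> * of_real k)) \<longlongrightarrow> 0 - 0 + L' / (\<i> * of_real k)) at_top"
    using k by (intro tendsto_intros U1 U2 L') auto
  have ev: "eventually (\<lambda>r. U (-r) - U r + \<Phi> r / (\<i> * of_real k) = integral {-r..r} (\<lambda>x. of_real (g x) * E k x)) at_top"
    using eventually_ge_at_top[of 0]
  proof eventually_elim
    case (elim r)
    show ?case unfolding U_def \<Phi>_def
      by (rule ibp[symmetric]) (use elim d cg' k in auto)
  qed
  have lim2: "((\<lambda>r. integral {-r..r} (\<lambda>x. of_real (g x) * E k x)) \<longlongrightarrow> L' / (\<i> * of_real k)) at_top"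
    using Lim_transform_eventually[OF lim ev] by simp
  show ?thesis
  proof (intro exI conjI allI impI)
    show "((\<lambda>r. integral {-r..r} (\<lambda>x. of_real (g x) * E k x)) \<longlongrightarrow> L' / (\<i> * of_real k)) at_top"
      by (rule lim2)
    fix K assume "eventually (\<lambda>r. cmod (integral {-r..r} (\<lambda>x. of_real (g' x) * E k x)) \<le> K) at_top"
    then have "cmod L' \<le> K" using Lim_norm_ubound[OF _ L'] unfolding \<Phi>_def by auto
    then show "cmod (L' / (\<i> * of_real k)) \<le> K / \<bar>k\<bar>"
      using k by (simp add: norm_divide norm_mult divide_right_mono)
  qed
qed

lemma comb:
  fixes \<phi> :: "real \<Rightarrow> complex"
  assumes "continuous_on UNIV \<phi>" "a \<le> c" "c \<le> b"
  shows "integral {a..b} \<phi> = integral {a..c} \<phi> + integral {c..b} \<phi>"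
proof -
  have i: "\<phi> integrable_on {a..b}"
    by (rule integrable_continuous_interval) (rule continuous_on_subset[OF assms(1)], auto)
  then show ?thesis using Henstock_Kurzweil_Integration.integral_combine[OF assms(2,3) i] by simp
qed

lemma shell_slice:
  fixes g' g'' :: "real \<Rightarrow> real"
  assumes d2: "\<And>x. (g' has_real_derivative g'' x) (at x)" and c2: "continuous_on UNIV g''"
    and S: "\<And>x. \<bar>g' x\<bar> \<le> S"
    and N: "0 \<le> N" "N \<le> M" "M - N \<le> B"
    and z: "{x. g'' x = 0} \<subseteq> {-M..-N} \<union> {N..M}"
    and k: "k \<noteq> 0" and r: "M \<le> r"
  shows "cmod (integral {-r..r} (\<lambda>x. of_real (g' x) * E k x)) \<le> 12 * S / \<bar>k\<bar> + 2 * (B * S)"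
proof -
  let ?f = "\<lambda>x. of_real (g' x) * E k x"
  let ?I = "\<lambda>a b. integral {a..b} ?f"
  have cg': "continuous_on UNIV g'"
    using d2 by (meson DERIV_isCont continuous_at_imp_continuous_on)
  have cf: "continuous_on UNIV ?f" by (intro continuous_intros cg')
  have cg's: "continuous_on T g'" for T using cg' by (rule continuous_on_subset) auto
  have c2s: "continuous_on T g''" for T using c2 by (rule continuous_on_subset) auto
  have eq: "?I (-r) r = ?I (-r) (-M) + ?I (-M) (-N) + ?I (-N) N + ?I N M + ?I M r"
    using comb[OF cf, of "-r" "-M" r] comb[OF cf, of "-M" "-N" r] comb[OF cf, of "-N" N r]
      comb[OF cf, of N M r] N r by simp
  have nz: "g'' x \<noteq> 0" if "x < -M \<or> (-N < x \<and> x < N) \<or> M < x" for x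
  proof
    assume "g'' x = 0"
    then have "x \<in> {-M..-N} \<union> {N..M}" using z by auto
    then show False using that N by auto
  qed
  have b1: "cmod (?I (-r) (-M)) \<le> 4 * S / \<bar>k\<bar>"
    by (rule piece_mono) (use r N d2 c2s S k nz in auto)
  have b3: "cmod (?I (-N) N) \<le> 4 * S / \<bar>k\<bar>"
    by (rule piece_mono) (use r N d2 c2s S k nz in auto)
  have b5: "cmod (?I M r) \<le> 4 * S / \<bar>k\<bar>"
    by (rule piece_mono) (use r N d2 c2s S k nz in auto)
  have b2: "cmod (?I (-M) (-N)) \<le> B * S"
    by (rule piece_short) (use N cg's S in auto)
  have b4: "cmod (?I N M) \<le> B * S"
    by (rule piece_short) (use N cg's S in auto)
  have "cmod (?I (-r) r) \<le> cmod (?I (-r) (-M)) + cmod (?I (-M) (-N)) + cmod (?I (-N) N) + cmod (?I N M) + cmod (?I M r)"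
    unfolding eq by (intro order.trans[OF norm_triangle_ineq] add_mono order_refl)
  also have "\<dots> \<le> 4 * S / \<bar>k\<bar> + B * S + 4 * S / \<bar>k\<bar> + B * S + 4 * S / \<bar>k\<bar>"
    by (intro add_mono b1 b2 b3 b4 b5)
  also have "\<dots> = 12 * S / \<bar>k\<bar> + 2 * (B * S)" by (simp add: field_simps)
  finally show ?thesis .
qed

lemma shell_norm:
  assumes "{x. h x = (0::real)} \<subseteq> {-M<..<-N} \<union> {N<..<M}" "M - N \<le> (B::real)"
  shows "\<exists>N' M'. 0 \<le> N' \<and> N' \<le> M' \<and> M' - N' \<le> max B 0 \<and> {x. h x = 0} \<subseteq> {-M'..-N'} \<union> {N'..M'}"
proof (cases "M \<le> N")
  case True
  then have "{-M<..<-N} \<union> {N<..<M} = {}" by auto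
  then show ?thesis using assms by (intro exI[of _ 0]) auto
next
  case False
  show ?thesis
  proof (cases "0 \<le> N")
    case True
    then show ?thesis using assms False by (intro exI[of _ N] exI[of _ M]) auto
  next
    case N0: False
    show ?thesis
    proof (cases "M \<le> 0")
      case True
      then show ?thesis using assms False N0 by (intro exI[of _ "-M"] exI[of _ "-N"]) auto
    next
      case M0: False
      have "{-M<..<-N} \<union> {N<..<M} \<subseteq> {- max M (-N)..-0} \<union> {0..max M (-N)}" by auto
      then show ?thesis using assms False N0 M0 by (intro exI[of _ 0] exI[of _ "max M (-N)"]) auto
    qed
  qed
qed

lemma crude:
  fixes g' :: "real \<Rightarrow> real" and y :: real
  assumes y: "\<bar>y\<bar> > 1" and bd: "\<And>x. \<bar>g' x\<bar> \<le> C / (x\<^sup>2 + y\<^sup>2)"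
    and cg': "continuous_on UNIV g'" and r: "1 \<le> r"
  shows "cmod (integral {-r..r} (\<lambda>x. of_real (g' x) * E k x)) \<le> 4 * C"
proof -
  let ?f = "\<lambda>x. of_real (g' x) * E k x"
  let ?I = "\<lambda>a b. integral {a..b} ?f"
  have "1 * 1 < \<bar>y\<bar> * \<bar>y\<bar>" using y by (intro mult_strict_mono) auto
  then have y2: "y\<^sup>2 > 1" by (simp add: power2_eq_square)
  have "0 \<le> C / (0\<^sup>2 + y\<^sup>2)" using bd[of 0] by (meson abs_ge_zero order_trans)
  then have C0: "C \<ge> 0" using y2 by (auto simp: zero_le_divide_iff)
  have cf: "continuous_on UNIV ?f" by (intro continuous_intros cg')
  have cs: "continuous_on T ?f" for T using cf by (rule continuous_on_subset) auto
  have cg's: "continuous_on T g'" for T using cg' by (rule continuous_on_subset) auto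
  have eq: "?I (-r) r = ?I (-r) (-1) + ?I (-1) 1 + ?I 1 r"
    using comb[OF cf, of "-r" "-1" r] comb[OF cf, of "-1" 1 r] r by simp
  have le1: "\<bar>g' x\<bar> \<le> C / x\<^sup>2" if "x \<noteq> 0" for x
  proof -
    have "C / (x\<^sup>2 + y\<^sup>2) \<le> C / x\<^sup>2" using C0 that y2
      by (intro divide_left_mono) (auto intro!: mult_pos_pos add_pos_pos)
    then show ?thesis using bd[of x] by linarith
  qed
  have le2: "\<bar>g' x\<bar> \<le> C" for x
  proof -
    have x0: "0 \<le> x\<^sup>2" by simp
    have h1: "1 \<le> x\<^sup>2 + y\<^sup>2" using y2 x0 by linarith
    have h2: "0 < (x\<^sup>2 + y\<^sup>2) * 1" using h1 by simp
    have "C / (x\<^sup>2 + y\<^sup>2) \<le> C / 1" by (rule divide_left_mono[OF h1 C0 h2])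
    then show ?thesis using bd[of x] by simp
  qed
  have b1: "cmod (?I (-r) (-1)) \<le> C * (1 / (-r) - 1 / (-1))"
    by (rule inv_sq_bound) (use r cs le1 in \<open>auto simp: norm_mult\<close>)
  have b3: "cmod (?I 1 r) \<le> C * (1 / 1 - 1 / r)"
    by (rule inv_sq_bound) (use r cs le1 in \<open>auto simp: norm_mult\<close>)
  have b2: "cmod (?I (-1) 1) \<le> 2 * C"
    by (rule piece_short) (use cg's le2 in auto)
  have "cmod (?I (-r) r) \<le> cmod (?I (-r) (-1)) + cmod (?I (-1) 1) + cmod (?I 1 r)"
    unfolding eq by (intro order.trans[OF norm_triangle_ineq] add_mono order_refl)
  also have "\<dots> \<le> C * (1 / (-r) - 1 / (-1)) + 2 * C + C * (1 / 1 - 1 / r)"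
    by (intro add_mono b1 b2 b3)
  also have "\<dots> \<le> 4 * C" using C0 r by (simp add: field_simps)
  finally show ?thesis .
qed

lemma decay_to_0:
  fixes h :: "real \<Rightarrow> real"
  assumes "\<And>r. r \<ge> 2 \<Longrightarrow> \<bar>h r\<bar> \<le> C / r"
  shows "(h \<longlongrightarrow> 0) at_top"
proof (rule Lim_null_comparison)
  show "eventually (\<lambda>r. norm (h r) \<le> C / r) at_top"
    using eventually_ge_at_top[of 2] by eventually_elim (use assms in auto)
  show "((\<lambda>r. C / r) \<longlongrightarrow> 0) at_top"
    by (intro tendsto_divide_0[OF tendsto_const] filterlim_at_top_imp_at_infinity filterlim_ident)
qed

lemma dir_main:
  fixes G G1 :: "real \<Rightarrow> real \<Rightarrow> real" and k :: real
  assumes H1: "\<And>y x. (G y has_real_derivative G1 y x) (at x)"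
    and H1c: "\<And>y. continuous_on UNIV (G1 y)"
    and H3: "\<And>y x. x\<^sup>2 + y\<^sup>2 > 1 \<Longrightarrow> \<bar>G y x\<bar> \<le> C3 / sqrt (x\<^sup>2 + y\<^sup>2)"
    and H4: "\<And>y x. x\<^sup>2 + y\<^sup>2 > 1 \<Longrightarrow> \<bar>G1 y x\<bar> \<le> C4 / (x\<^sup>2 + y\<^sup>2)"
    and HB: "\<exists>R K. \<forall>y. \<bar>y\<bar> > R \<longrightarrow>
        eventually (\<lambda>r. cmod (integral {-r..r} (\<lambda>x. of_real (G1 y x) * E k x)) \<le> K / y\<^sup>2) at_top"
    and k: "k \<noteq> 0"
  shows "(\<forall>y. \<exists>L. ((\<lambda>r. integral {-r..r} (\<lambda>x. of_real (G y x) * E k x)) \<longlongrightarrow> L) at_top) \<and>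
    (\<exists>C>0. \<forall>y. \<bar>y\<bar> > 1 \<longrightarrow>
        cmod (Lim at_top (\<lambda>r. integral {-r..r} (\<lambda>x. of_real (G y x) * E k x))) \<le> C / y\<^sup>2)"
proof -
  have C3: "C3 \<ge> 0" using H3[of 0 2] by (auto simp: zero_le_divide_iff)
  have C4: "C4 \<ge> 0" using H4[of 0 2] by (auto simp: zero_le_divide_iff)
  have slice: "\<exists>L. ((\<lambda>r. integral {-r..r} (\<lambda>x. of_real (G y x) * E k x)) \<longlongrightarrow> L) at_top \<and>
     (\<forall>K. eventually (\<lambda>r. cmod (integral {-r..r} (\<lambda>x. of_real (G1 y x) * E k x)) \<le> K) at_top
          \<longrightarrow> cmod L \<le> K / \<bar>k\<bar>)" for y
  proof (rule slice_main[OF H1 H1c _ _ _ k])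
    have g: "\<bar>G y r\<bar> \<le> C3 / \<bar>r\<bar>" if "\<bar>r\<bar> \<ge> 2" for r
    proof -
      have "2\<^sup>2 \<le> \<bar>r\<bar>\<^sup>2" by (rule power_mono) (use that in auto)
      then have r2: "r\<^sup>2 \<ge> 4" by simp
      have y0: "0 \<le> y\<^sup>2" by simp
      have "\<bar>r\<bar> \<le> sqrt (r\<^sup>2 + y\<^sup>2)" by (rule real_le_rsqrt) (use y0 in simp)
      moreover have "0 < sqrt (r\<^sup>2 + y\<^sup>2) * \<bar>r\<bar>" 
        by (intro mult_pos_pos) (use calculation that in linarith)+
      ultimately have "C3 / sqrt (r\<^sup>2 + y\<^sup>2) \<le> C3 / \<bar>r\<bar>" using C3
        by (intro divide_left_mono) auto
      moreover have "r\<^sup>2 + y\<^sup>2 > 1" using r2 y0 by linarith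
      ultimately show ?thesis using H3[of r y] by linarith
    qed
    show "(G y \<longlongrightarrow> 0) at_top"
    proof (rule decay_to_0[of _ C3])
      fix r :: real assume "2 \<le> r" then show "\<bar>G y r\<bar> \<le> C3 / r" using g[of r] by simp
    qed
    show "((\<lambda>r. G y (- r)) \<longlongrightarrow> 0) at_top"
    proof (rule decay_to_0[of _ C3])
      fix r :: real assume "2 \<le> r" then show "\<bar>G y (-r)\<bar> \<le> C3 / r" using g[of "-r"] by simp
    qed
    show "\<bar>G1 y x\<bar> \<le> C4 / x\<^sup>2" if "\<bar>x\<bar> \<ge> 2" for x
    proof -
      have "2\<^sup>2 \<le> \<bar>x\<bar>\<^sup>2" by (rule power_mono) (use that in auto)
      then have x2: "x\<^sup>2 \<ge> 4" by simp
      have y0: "0 \<le> y\<^sup>2" by simp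
      have h2: "0 < (x\<^sup>2 + y\<^sup>2) * x\<^sup>2" using x2 y0 by (intro mult_pos_pos) linarith+
      have "C4 / (x\<^sup>2 + y\<^sup>2) \<le> C4 / x\<^sup>2"
        by (rule divide_left_mono[OF _ C4 h2]) (use y0 in linarith)
      moreover have "x\<^sup>2 + y\<^sup>2 > 1" using x2 y0 by linarith
      ultimately show ?thesis using H4[of x y] by linarith
    qed
  qed
  then have "\<forall>y. \<exists>L. ((\<lambda>r. integral {-r..r} (\<lambda>x. of_real (G y x) * E k x)) \<longlongrightarrow> L) at_top \<and>
     (\<forall>K. eventually (\<lambda>r. cmod (integral {-r..r} (\<lambda>x. of_real (G1 y x) * E k x)) \<le> K) at_top
          \<longrightarrow> cmod L \<le> K / \<bar>k\<bar>)" by blast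
  from choice[OF this] obtain L where LL: "\<forall>y. ((\<lambda>r. integral {-r..r} (\<lambda>x. of_real (G y x) * E k x)) \<longlongrightarrow> L y) at_top \<and>
     (\<forall>K. eventually (\<lambda>r. cmod (integral {-r..r} (\<lambda>x. of_real (G1 y x) * E k x)) \<le> K) at_top
          \<longrightarrow> cmod (L y) \<le> K / \<bar>k\<bar>)" by blast
  have L: "\<And>y. ((\<lambda>r. integral {-r..r} (\<lambda>x. of_real (G y x) * E k x)) \<longlongrightarrow> L y) at_top"
    using LL by blast
  have Lb: "\<And>y K. eventually (\<lambda>r. cmod (integral {-r..r} (\<lambda>x. of_real (G1 y x) * E k x)) \<le> K) at_top
          \<Longrightarrow> cmod (L y) \<le> K / \<bar>k\<bar>"
    using LL by blast
  have Lim: "Lim at_top (\<lambda>r. integral {-r..r} (\<lambda>x. of_real (G y x) * E k x)) = L y" for y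
    by (rule tendsto_Lim[OF _ L]) simp
  from HB obtain R K where HB': "\<And>y. \<bar>y\<bar> > R \<Longrightarrow>
        eventually (\<lambda>r. cmod (integral {-r..r} (\<lambda>x. of_real (G1 y x) * E k x)) \<le> K / y\<^sup>2) at_top"
    by blast
  define R' where "R' = max R 1"
  define C where "C = max (K / \<bar>k\<bar>) (4 * C4 * R'\<^sup>2 / \<bar>k\<bar>) + 1"
  have kpos: "\<bar>k\<bar> > 0" using k by simp
  have "C > 0" unfolding C_def using C4 kpos by (intro add_nonneg_pos) (auto intro: max.coboundedI2)
  moreover have "cmod (L y) \<le> C / y\<^sup>2" if y: "\<bar>y\<bar> > 1" for y
  proof -
    have "1 * 1 < \<bar>y\<bar> * \<bar>y\<bar>" using y by (intro mult_strict_mono) auto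
    then have y2: "y\<^sup>2 > 1" by (simp add: power2_eq_square)
    show ?thesis
    proof (cases "\<bar>y\<bar> > R'")
      case True
      then have "\<bar>y\<bar> > R" unfolding R'_def by auto
      from Lb[OF HB'[OF this]] have "cmod (L y) \<le> K / y\<^sup>2 / \<bar>k\<bar>" .
      also have "\<dots> = (K / \<bar>k\<bar>) / y\<^sup>2" by simp
      also have "\<dots> \<le> C / y\<^sup>2" using y2 unfolding C_def by (intro divide_right_mono) auto
      finally show ?thesis .
    next
      case False
      have "eventually (\<lambda>r. cmod (integral {-r..r} (\<lambda>x. of_real (G1 y x) * E k x)) \<le> 4 * C4) at_top"
        using eventually_ge_at_top[of 1]
      proof eventually_elim
        case (elim r)
        show ?case
        proof (rule crude[OF y _ H1c elim])
          fix x
          have "x\<^sup>2 + y\<^sup>2 > 1" using y2 by (simp add: add_nonneg_pos add.commute add_strict_increasing2)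
          then show "\<bar>G1 y x\<bar> \<le> C4 / (x\<^sup>2 + y\<^sup>2)" by (rule H4)
        qed
      qed
      from Lb[OF this] have "cmod (L y) \<le> 4 * C4 / \<bar>k\<bar>" .
      also have "\<dots> = (4 * C4 * y\<^sup>2 / \<bar>k\<bar>) / y\<^sup>2" using y2 by (auto simp: field_simps)
      also have "\<dots> \<le> (4 * C4 * R'\<^sup>2 / \<bar>k\<bar>) / y\<^sup>2"
      proof -
        have "\<bar>y\<bar> \<le> R'" using False by simp
        then have "y\<^sup>2 \<le> R'\<^sup>2" by (metis abs_ge_zero power2_abs power_mono)
        then show ?thesis using C4 kpos y2
          by (intro divide_right_mono mult_left_mono) auto
      qed
      also have "\<dots> \<le> C / y\<^sup>2" using y2 unfolding C_def by (intro divide_right_mono) auto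
      finally show ?thesis .
    qed
  qed
  ultimately have "\<exists>C>0. \<forall>y. \<bar>y\<bar> > 1 \<longrightarrow>
        cmod (Lim at_top (\<lambda>r. integral {-r..r} (\<lambda>x. of_real (G y x) * E k x))) \<le> C / y\<^sup>2"
    unfolding Lim by blast
  then show ?thesis using L by blast
qed

lemma shell_HB:
  fixes G1 G2 :: "real \<Rightarrow> real \<Rightarrow> real"
  assumes d: "\<And>y x. (G1 y has_real_derivative G2 y x) (at x)"
    and c: "\<And>y. continuous_on UNIV (G2 y)"
    and H4: "\<And>y x. x\<^sup>2 + y\<^sup>2 > 1 \<Longrightarrow> \<bar>G1 y x\<bar> \<le> C4 / (x\<^sup>2 + y\<^sup>2)"
    and Z: "zeros_in_shells G2"
    and k: "k \<noteq> 0"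
  shows "\<exists>R K. \<forall>y. \<bar>y\<bar> > R \<longrightarrow>
        eventually (\<lambda>r. cmod (integral {-r..r} (\<lambda>x. of_real (G1 y x) * E k x)) \<le> K / y\<^sup>2) at_top"
proof -
  have C4: "C4 \<ge> 0" using H4[of 0 2] by (auto simp: zero_le_divide_iff)
  from Z obtain R B where RB: "\<And>s. \<bar>s\<bar> > R \<Longrightarrow>
        (\<exists>M N. M - N \<le> B \<and> {t. G2 s t = 0} \<subseteq> {- M<..<- N} \<union> {N<..<M})"
    unfolding zeros_in_shells_def by blast
  define B' where "B' = max B 0"
  define K where "K = 12 * C4 / \<bar>k\<bar> + 2 * (B' * C4)"
  show ?thesis
  proof (intro exI allI impI)
    fix y :: real assume y: "\<bar>y\<bar> > max R 1"
    then obtain M N where MN: "M - N \<le> B" "{t. G2 y t = 0} \<subseteq> {- M<..<- N} \<union> {N<..<M}"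
      using RB by force
    obtain N' M' where NM: "0 \<le> N'" "N' \<le> M'" "M' - N' \<le> B'" "{t. G2 y t = 0} \<subseteq> {-M'..-N'} \<union> {N'..M'}"
      using shell_norm[OF MN(2,1)] unfolding B'_def by blast
    have "1 * 1 < \<bar>y\<bar> * \<bar>y\<bar>" using y by (intro mult_strict_mono) auto
    then have y2: "y\<^sup>2 > 1" by (simp add: power2_eq_square)
    have S: "\<bar>G1 y x\<bar> \<le> C4 / y\<^sup>2" for x
    proof -
      have x0: "0 \<le> x\<^sup>2" by simp
      have h1: "x\<^sup>2 + y\<^sup>2 > 1" using y2 x0 by linarith
      have h2: "0 < (x\<^sup>2 + y\<^sup>2) * y\<^sup>2" using y2 x0 by (intro mult_pos_pos) linarith+
      have "C4 / (x\<^sup>2 + y\<^sup>2) \<le> C4 / y\<^sup>2"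
        by (rule divide_left_mono[OF _ C4 h2]) (use x0 in linarith)
      then show ?thesis using H4[OF h1] by linarith
    qed
    show "eventually (\<lambda>r. cmod (integral {-r..r} (\<lambda>x. of_real (G1 y x) * E k x)) \<le> K / y\<^sup>2) at_top"
      using eventually_ge_at_top[of M']
    proof eventually_elim
      case (elim r)
      have "cmod (integral {-r..r} (\<lambda>x. of_real (G1 y x) * E k x)) \<le> 12 * (C4 / y\<^sup>2) / \<bar>k\<bar> + 2 * (B' * (C4 / y\<^sup>2))"
        by (rule shell_slice[OF d c S NM k elim])
      also have "\<dots> = K / y\<^sup>2" 
      proof -
        have yn: "y\<^sup>2 \<noteq> 0" using y2 by linarith
        have kn: "\<bar>k\<bar> \<noteq> 0" using k by simp
        show ?thesis unfolding K_def using yn kn by (simp add: field_simps)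
      qed
      finally show ?case .
    qed
  qed
qed

lemma split_HB:
  fixes G1 Ga Gb :: "real \<Rightarrow> real \<Rightarrow> real"
  assumes ca: "\<And>y. continuous_on UNIV (Ga y)" and cb: "\<And>y. continuous_on UNIV (Gb y)"
    and eq: "\<exists>R. \<forall>y. \<bar>y\<bar> > R \<longrightarrow> (\<forall>x. G1 y x = Ga y x + Gb y x)"
    and Ha: "\<exists>R K. \<forall>y. \<bar>y\<bar> > R \<longrightarrow>
        eventually (\<lambda>r. cmod (integral {-r..r} (\<lambda>x. of_real (Ga y x) * E k x)) \<le> K / y\<^sup>2) at_top"
    and Hb: "\<exists>R K. \<forall>y. \<bar>y\<bar> > R \<longrightarrow>
        eventually (\<lambda>r. cmod (integral {-r..r} (\<lambda>x. of_real (Gb y x) * E k x)) \<le> K / y\<^sup>2) at_top"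
  shows "\<exists>R K. \<forall>y. \<bar>y\<bar> > R \<longrightarrow>
        eventually (\<lambda>r. cmod (integral {-r..r} (\<lambda>x. of_real (G1 y x) * E k x)) \<le> K / y\<^sup>2) at_top"
proof -
  obtain R0 where R0: "\<And>y x. \<bar>y\<bar> > R0 \<Longrightarrow> G1 y x = Ga y x + Gb y x" using eq by blast
  obtain R1 K1 where R1: "\<And>y. \<bar>y\<bar> > R1 \<Longrightarrow>
        eventually (\<lambda>r. cmod (integral {-r..r} (\<lambda>x. of_real (Ga y x) * E k x)) \<le> K1 / y\<^sup>2) at_top"
    using Ha by blast
  obtain R2 K2 where R2: "\<And>y. \<bar>y\<bar> > R2 \<Longrightarrow>
        eventually (\<lambda>r. cmod (integral {-r..r} (\<lambda>x. of_real (Gb y x) * E k x)) \<le> K2 / y\<^sup>2) at_top"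
    using Hb by blast
  show ?thesis
  proof (intro exI allI impI)
    fix y :: real assume y: "\<bar>y\<bar> > max R0 (max R1 R2)"
    have ia: "(\<lambda>x. of_real (Ga y x) * E k x) integrable_on {a..b}" for a b
      by (intro integrable_continuous_interval continuous_intros continuous_on_subset[OF ca]) auto
    have ib: "(\<lambda>x. of_real (Gb y x) * E k x) integrable_on {a..b}" for a b
      by (intro integrable_continuous_interval continuous_intros continuous_on_subset[OF cb]) auto
    have feq: "(\<lambda>x. of_real (G1 y x) * E k x) = (\<lambda>x. of_real (Ga y x) * E k x + of_real (Gb y x) * E k x)"
      using R0[of y] y by (auto simp: algebra_simps)
    show "eventually (\<lambda>r. cmod (integral {-r..r} (\<lambda>x. of_real (G1 y x) * E k x)) \<le> (K1 + K2) / y\<^sup>2) at_top"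
    proof -
      have e1: "eventually (\<lambda>r. cmod (integral {-r..r} (\<lambda>x. of_real (Ga y x) * E k x)) \<le> K1 / y\<^sup>2) at_top"
        using R1[of y] y by auto
      have e2: "eventually (\<lambda>r. cmod (integral {-r..r} (\<lambda>x. of_real (Gb y x) * E k x)) \<le> K2 / y\<^sup>2) at_top"
        using R2[of y] y by auto
      from e1 e2 show ?thesis
      proof eventually_elim
      case (elim r)
      note a = elim(1) and b = elim(2)
      have eqI: "integral {-r..r} (\<lambda>x. of_real (G1 y x) * E k x) =
          integral {-r..r} (\<lambda>x. of_real (Ga y x) * E k x) + integral {-r..r} (\<lambda>x. of_real (Gb y x) * E k x)"
        unfolding feq by (rule integral_add[OF ia ib])
      have "cmod (integral {-r..r} (\<lambda>x. of_real (G1 y x) * E k x)) \<le> K1 / y\<^sup>2 + K2 / y\<^sup>2"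
        unfolding eqI by (rule order.trans[OF norm_triangle_ineq add_mono[OF a b]])
      then show ?case by (simp add: add_divide_distrib)
      qed
    qed
  qed
qed

lemma slice_x:
  assumes "(h has_derivative h') (at (x, y))"
  shows "((\<lambda>x. h (x, y)) has_real_derivative h' (1, 0)) (at x)"
proof -
  have p: "((\<lambda>x. (x, y)) has_derivative (\<lambda>t. (t, 0))) (at x)"
    by (intro has_derivative_Pair has_derivative_ident has_derivative_const)
  have c: "((\<lambda>x. h (x, y)) has_derivative (\<lambda>t. h' (t, 0))) (at x)"
    using has_derivative_compose[OF p assms] by simp
  have lin: "linear h'" using assms by (rule has_derivative_linear)
  have eqt: "h' (t, 0) = h' (1, 0) * t" for t
  proof -
    have "h' (t, 0) = h' (t *\<^sub>R (1, 0))" by simp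
    also have "\<dots> = t *\<^sub>R h' (1, 0)" by (rule linear_scale[OF lin])
    finally show ?thesis by simp
  qed
  have "(\<lambda>t. h' (t, 0)) = (*) (h' (1, 0))" by (intro ext) (rule eqt)
  with c show ?thesis unfolding has_field_derivative_def by simp
qed

lemma slice_y:
  assumes "(h has_derivative h') (at (x, y))"
  shows "((\<lambda>y. h (x, y)) has_real_derivative h' (0, 1)) (at y)"
proof -
  have p: "((\<lambda>y. (x, y)) has_derivative (\<lambda>t. (0, t))) (at y)"
    by (intro has_derivative_Pair has_derivative_ident has_derivative_const)
  have c: "((\<lambda>y. h (x, y)) has_derivative (\<lambda>t. h' (0, t))) (at y)"
    using has_derivative_compose[OF p assms] by simp
  have lin: "linear h'" using assms by (rule has_derivative_linear)
  have eqt: "h' (0, t) = h' (0, 1) * t" for t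
  proof -
    have "h' (0, t) = h' (t *\<^sub>R (0, 1))" by simp
    also have "\<dots> = t *\<^sub>R h' (0, 1)" by (rule linear_scale[OF lin])
    finally show ?thesis by simp
  qed
  have "(\<lambda>t. h' (0, t)) = (*) (h' (0, 1))" by (intro ext) (rule eqt)
  with c show ?thesis unfolding has_field_derivative_def by simp
qed

lemma smooth_parts:
  assumes "smooth2 f"
  obtains D11 D22 where
    "\<And>x y. ((\<lambda>x. f (x, y)) has_real_derivative partial_x f (x, y)) (at x)"
    "\<And>x y. ((\<lambda>y. f (x, y)) has_real_derivative partial_y f (x, y)) (at y)"
    "\<And>x y. ((\<lambda>x. partial_x f (x, y)) has_real_derivative D11 (x, y)) (at x)"
    "\<And>x y. ((\<lambda>y. partial_y f (x, y)) has_real_derivative D22 (x, y)) (at y)"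
    "continuous_on UNIV D11" "continuous_on UNIV D22"
proof -
  have "Ck_on (Suc (Suc 0)) UNIV f" using assms unfolding smooth2_def by blast
  then obtain f' where f': "\<And>p. (f has_derivative f' p) (at p)"
    and c1: "Ck_on (Suc 0) UNIV (\<lambda>p. f' p (1, 0))" and c2: "Ck_on (Suc 0) UNIV (\<lambda>p. f' p (0, 1))"
    by auto
  from c1 obtain g where g: "\<And>p. ((\<lambda>p. f' p (1, 0)) has_derivative g p) (at p)"
    and gc: "continuous_on UNIV (\<lambda>p. g p (1, 0))" by auto
  from c2 obtain h where h: "\<And>p. ((\<lambda>p. f' p (0, 1)) has_derivative h p) (at p)"
    and hc: "continuous_on UNIV (\<lambda>p. h p (0, 1))" by auto
  have dx: "((\<lambda>x. f (x, y)) has_real_derivative f' (x, y) (1, 0)) (at x)" for x y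
    by (rule slice_x[OF f'])
  have dy: "((\<lambda>y. f (x, y)) has_real_derivative f' (x, y) (0, 1)) (at y)" for x y
    by (rule slice_y[OF f'])
  have px: "partial_x f (x, y) = f' (x, y) (1, 0)" for x y
    unfolding partial_x_def using DERIV_imp_deriv[OF dx] by simp
  have py: "partial_y f (x, y) = f' (x, y) (0, 1)" for x y
    unfolding partial_y_def using DERIV_imp_deriv[OF dy] by simp
  show ?thesis
  proof (rule that[of "\<lambda>p. g p (1, 0)" "\<lambda>p. h p (0, 1)"])
    show "((\<lambda>x. f (x, y)) has_real_derivative partial_x f (x, y)) (at x)" for x y
      unfolding px by (rule dx)
    show "((\<lambda>y. f (x, y)) has_real_derivative partial_y f (x, y)) (at y)" for x y
      unfolding py by (rule dy)
    show "((\<lambda>x. partial_x f (x, y)) has_real_derivative g (x, y) (1, 0)) (at x)" for x y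
      unfolding px by (rule slice_x[OF g])
    show "((\<lambda>y. partial_y f (x, y)) has_real_derivative h (x, y) (0, 1)) (at y)" for x y
      unfolding py by (rule slice_y[OF h])
  qed (use gc hc in auto)
qed

lemma norm_pair_sq: "norm (x::real, y::real) = sqrt (x\<^sup>2 + y\<^sup>2)"
  by (simp add: norm_Pair)

lemma vmd_bound:
  assumes "very_moderate_decrease g"
  shows "\<exists>C. \<forall>x y. x\<^sup>2 + y\<^sup>2 > 1 \<longrightarrow> \<bar>g (x, y)\<bar> \<le> C / sqrt (x\<^sup>2 + y\<^sup>2)"
proof -
  obtain C where C: "\<And>p. norm p > 1 \<Longrightarrow> \<bar>g p\<bar> \<le> C / norm p"
    using assms unfolding very_moderate_decrease_def by blast
  show ?thesis
  proof (intro exI allI impI)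
    fix x y :: real assume "x\<^sup>2 + y\<^sup>2 > 1"
    then have "1 < sqrt (x\<^sup>2 + y\<^sup>2)" by (intro real_less_rsqrt) simp
    then show "\<bar>g (x, y)\<bar> \<le> C / sqrt (x\<^sup>2 + y\<^sup>2)" using C[of "(x, y)"] by (simp add: norm_pair_sq)
  qed
qed

lemma md_bound:
  assumes "moderate_decrease g"
  shows "\<exists>C. \<forall>x y. x\<^sup>2 + y\<^sup>2 > 1 \<longrightarrow> \<bar>g (x, y)\<bar> \<le> C / (x\<^sup>2 + y\<^sup>2)"
proof -
  obtain C where C: "\<And>p. norm p > 1 \<Longrightarrow> \<bar>g p\<bar> \<le> C / (norm p)\<^sup>2"
    using assms unfolding moderate_decrease_def by blast
  show ?thesis
  proof (intro exI allI impI)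
    fix x y :: real assume "x\<^sup>2 + y\<^sup>2 > 1"
    then have "1 < sqrt (x\<^sup>2 + y\<^sup>2)" by (intro real_less_rsqrt) simp
    moreover have "(sqrt (x\<^sup>2 + y\<^sup>2))\<^sup>2 = x\<^sup>2 + y\<^sup>2" by simp
    ultimately show "\<bar>g (x, y)\<bar> \<le> C / (x\<^sup>2 + y\<^sup>2)" using C[of "(x, y)"] by (simp add: norm_pair_sq)
  qed
qed

lemma cont_slice_x: "continuous_on UNIV D \<Longrightarrow> continuous_on UNIV (\<lambda>x. D (x, y::real))"
  by (rule continuous_on_compose2[of UNIV D UNIV "\<lambda>x. (x, y)"]) (auto intro: continuous_intros)

lemma cont_slice_y: "continuous_on UNIV D \<Longrightarrow> continuous_on UNIV (\<lambda>y. D (x::real, y))"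
  by (rule continuous_on_compose2[of UNIV D UNIV "\<lambda>y. (x, y)"]) (auto intro: continuous_intros)

lemma deriv_cont: "(\<And>x. (g has_real_derivative g' x) (at x)) \<Longrightarrow> continuous_on UNIV g"
  by (meson DERIV_isCont continuous_at_imp_continuous_on)

lemma qn_HB:
  assumes sm: "smooth2 h" and qn: "quasi_normal h" and k: "k \<noteq> 0"
  shows "\<exists>R K. \<forall>y. \<bar>y\<bar> > R \<longrightarrow>
        eventually (\<lambda>r. cmod (integral {-r..r} (\<lambda>x. of_real (partial_x h (x, y)) * E k x)) \<le> K / y\<^sup>2) at_top"
    and "\<exists>R K. \<forall>x. \<bar>x\<bar> > R \<longrightarrow>
        eventually (\<lambda>r. cmod (integral {-r..r} (\<lambda>y. of_real (partial_y h (x, y)) * E k y)) \<le> K / x\<^sup>2) at_top"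
proof -
  obtain D11 D22 where d1: "\<And>x y. ((\<lambda>x. h (x, y)) has_real_derivative partial_x h (x, y)) (at x)"
    and d2: "\<And>x y. ((\<lambda>y. h (x, y)) has_real_derivative partial_y h (x, y)) (at y)"
    and d11: "\<And>x y. ((\<lambda>x. partial_x h (x, y)) has_real_derivative D11 (x, y)) (at x)"
    and d22: "\<And>x y. ((\<lambda>y. partial_y h (x, y)) has_real_derivative D22 (x, y)) (at y)"
    and c11: "continuous_on UNIV D11" and c22: "continuous_on UNIV D22"
    using smooth_parts[OF sm] by metis
  have e1: "deriv (deriv (\<lambda>x. h (x, y))) = (\<lambda>x. D11 (x, y))" for y
  proof -
    have "deriv (\<lambda>x. h (x, y)) = (\<lambda>x. partial_x h (x, y))"
      by (rule ext) (rule DERIV_imp_deriv[OF d1])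
    then show ?thesis by (auto intro!: ext DERIV_imp_deriv[OF d11])
  qed
  have e2: "deriv (deriv (\<lambda>y. h (x, y))) = (\<lambda>y. D22 (x, y))" for x
  proof -
    have "deriv (\<lambda>y. h (x, y)) = (\<lambda>y. partial_y h (x, y))"
      by (rule ext) (rule DERIV_imp_deriv[OF d2])
    then show ?thesis by (auto intro!: ext DERIV_imp_deriv[OF d22])
  qed
  have z1: "zeros_in_shells (\<lambda>y x. D11 (x, y))"
    using qn unfolding quasi_normal_def e1 by blast
  have z2: "zeros_in_shells (\<lambda>x y. D22 (x, y))"
    using qn unfolding quasi_normal_def e2 by blast
  have "moderate_decrease (partial_x h)" "moderate_decrease (partial_y h)"
    using qn unfolding quasi_normal_def conds_i_to_iv_def by blast+
  then obtain Cx Cy where Cx: "\<And>x y. x\<^sup>2 + y\<^sup>2 > 1 \<Longrightarrow> \<bar>partial_x h (x, y)\<bar> \<le> Cx / (x\<^sup>2 + y\<^sup>2)"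
    and Cy: "\<And>x y. x\<^sup>2 + y\<^sup>2 > 1 \<Longrightarrow> \<bar>partial_y h (x, y)\<bar> \<le> Cy / (x\<^sup>2 + y\<^sup>2)"
    using md_bound by metis
  show "\<exists>R K. \<forall>y. \<bar>y\<bar> > R \<longrightarrow>
        eventually (\<lambda>r. cmod (integral {-r..r} (\<lambda>x. of_real (partial_x h (x, y)) * E k x)) \<le> K / y\<^sup>2) at_top"
    by (rule shell_HB[of "\<lambda>y x. partial_x h (x, y)" "\<lambda>y x. D11 (x, y)" Cx, OF d11 cont_slice_x[OF c11] Cx z1 k])
  show "\<exists>R K. \<forall>x. \<bar>x\<bar> > R \<longrightarrow>
        eventually (\<lambda>r. cmod (integral {-r..r} (\<lambda>y. of_real (partial_y h (x, y)) * E k y)) \<le> K / x\<^sup>2) at_top"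
  proof (rule shell_HB[of "\<lambda>x y. partial_y h (x, y)" "\<lambda>x y. D22 (x, y)" Cy, OF d22 cont_slice_y[OF c22] _ z2 k])
    fix a b :: real assume "b\<^sup>2 + a\<^sup>2 > 1"
    then show "\<bar>partial_y h (a, b)\<bar> \<le> Cy / (b\<^sup>2 + a\<^sup>2)" using Cy[of a b] by (simp add: add.commute)
  qed
qed

lemma all_HB:
  assumes sm: "smooth2 f" and q: "quasi_normal f \<or> quasi_split_normal f" and k: "k \<noteq> 0"
  shows "\<exists>R K. \<forall>y. \<bar>y\<bar> > R \<longrightarrow>
        eventually (\<lambda>r. cmod (integral {-r..r} (\<lambda>x. of_real (partial_x f (x, y)) * E k x)) \<le> K / y\<^sup>2) at_top"
    and "\<exists>R K. \<forall>x. \<bar>x\<bar> > R \<longrightarrow>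
        eventually (\<lambda>r. cmod (integral {-r..r} (\<lambda>y. of_real (partial_y f (x, y)) * E k y)) \<le> K / x\<^sup>2) at_top"
proof -
  have "(\<exists>R K. \<forall>y. \<bar>y\<bar> > R \<longrightarrow>
        eventually (\<lambda>r. cmod (integral {-r..r} (\<lambda>x. of_real (partial_x f (x, y)) * E k x)) \<le> K / y\<^sup>2) at_top)
    \<and> (\<exists>R K. \<forall>x. \<bar>x\<bar> > R \<longrightarrow>
        eventually (\<lambda>r. cmod (integral {-r..r} (\<lambda>y. of_real (partial_y f (x, y)) * E k y)) \<le> K / x\<^sup>2) at_top)"
  proof (cases "quasi_normal f")
    case True
    then show ?thesis using qn_HB[OF sm True k] by blast
  next
    case False
    then have "quasi_split_normal f" using q by blast
    then obtain R f1 f2 where s1: "smooth2 f1" and s2: "smooth2 f2" and q1: "quasi_normal f1"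
      and q2: "quasi_normal f2" and eq: "\<And>p. norm p > R \<Longrightarrow> f p = f1 p + f2 p"
      unfolding quasi_split_normal_def by blast
    obtain A11 A22 where a1: "\<And>x y. ((\<lambda>x. f1 (x, y)) has_real_derivative partial_x f1 (x, y)) (at x)"
      and a2: "\<And>x y. ((\<lambda>y. f1 (x, y)) has_real_derivative partial_y f1 (x, y)) (at y)"
      and a11: "\<And>x y. ((\<lambda>x. partial_x f1 (x, y)) has_real_derivative A11 (x, y)) (at x)"
      and a22: "\<And>x y. ((\<lambda>y. partial_y f1 (x, y)) has_real_derivative A22 (x, y)) (at y)"
      using smooth_parts[OF s1] by metis
    obtain B11 B22 where b1: "\<And>x y. ((\<lambda>x. f2 (x, y)) has_real_derivative partial_x f2 (x, y)) (at x)"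
      and b2: "\<And>x y. ((\<lambda>y. f2 (x, y)) has_real_derivative partial_y f2 (x, y)) (at y)"
      and b11: "\<And>x y. ((\<lambda>x. partial_x f2 (x, y)) has_real_derivative B11 (x, y)) (at x)"
      and b22: "\<And>x y. ((\<lambda>y. partial_y f2 (x, y)) has_real_derivative B22 (x, y)) (at y)"
      using smooth_parts[OF s2] by metis
    have HX: "\<exists>R K. \<forall>y. \<bar>y\<bar> > R \<longrightarrow>
        eventually (\<lambda>r. cmod (integral {-r..r} (\<lambda>x. of_real (partial_x f (x, y)) * E k x)) \<le> K / y\<^sup>2) at_top"
    proof (rule split_HB[of "\<lambda>y x. partial_x f1 (x, y)" "\<lambda>y x. partial_x f2 (x, y)"])
      show "continuous_on UNIV (\<lambda>x. partial_x f1 (x, y))" for y by (rule deriv_cont[OF a11])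
      show "continuous_on UNIV (\<lambda>x. partial_x f2 (x, y))" for y by (rule deriv_cont[OF b11])
      show "\<exists>R K. \<forall>y. \<bar>y\<bar> > R \<longrightarrow>
        eventually (\<lambda>r. cmod (integral {-r..r} (\<lambda>x. of_real (partial_x f1 (x, y)) * E k x)) \<le> K / y\<^sup>2) at_top"
        by (rule qn_HB(1)[OF s1 q1 k])
      show "\<exists>R K. \<forall>y. \<bar>y\<bar> > R \<longrightarrow>
        eventually (\<lambda>r. cmod (integral {-r..r} (\<lambda>x. of_real (partial_x f2 (x, y)) * E k x)) \<le> K / y\<^sup>2) at_top"
        by (rule qn_HB(1)[OF s2 q2 k])
      show "\<exists>R. \<forall>y. \<bar>y\<bar> > R \<longrightarrow> (\<forall>x. partial_x f (x, y) = partial_x f1 (x, y) + partial_x f2 (x, y))"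
      proof (intro exI allI impI)
        fix x y :: real assume y: "\<bar>y\<bar> > R"
        have "(\<lambda>x. f (x, y)) = (\<lambda>x. f1 (x, y) + f2 (x, y))"
        proof
          fix x :: real
          have "norm y \<le> norm (x, y)" by (metis norm_snd_le snd_conv)
          then show "f (x, y) = f1 (x, y) + f2 (x, y)" using y by (intro eq) simp
        qed
        note feq = this
        have "partial_x f (x, y) = deriv (\<lambda>x. f (x, y)) x" by (simp add: partial_x_def)
        also have "\<dots> = deriv (\<lambda>x. f1 (x, y) + f2 (x, y)) x" by (simp only: feq)
        also have "\<dots> = partial_x f1 (x, y) + partial_x f2 (x, y)" by (rule DERIV_imp_deriv[OF DERIV_add[OF a1 b1]])
        finally show "partial_x f (x, y) = partial_x f1 (x, y) + partial_x f2 (x, y)" .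
      qed
    qed
    have HY: "\<exists>R K. \<forall>x. \<bar>x\<bar> > R \<longrightarrow>
        eventually (\<lambda>r. cmod (integral {-r..r} (\<lambda>y. of_real (partial_y f (x, y)) * E k y)) \<le> K / x\<^sup>2) at_top"
    proof (rule split_HB[of "\<lambda>x y. partial_y f1 (x, y)" "\<lambda>x y. partial_y f2 (x, y)"])
      show "continuous_on UNIV (\<lambda>y. partial_y f1 (x, y))" for x by (rule deriv_cont[OF a22])
      show "continuous_on UNIV (\<lambda>y. partial_y f2 (x, y))" for x by (rule deriv_cont[OF b22])
      show "\<exists>R K. \<forall>x. \<bar>x\<bar> > R \<longrightarrow>
        eventually (\<lambda>r. cmod (integral {-r..r} (\<lambda>y. of_real (partial_y f1 (x, y)) * E k y)) \<le> K / x\<^sup>2) at_top"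
        by (rule qn_HB(2)[OF s1 q1 k])
      show "\<exists>R K. \<forall>x. \<bar>x\<bar> > R \<longrightarrow>
        eventually (\<lambda>r. cmod (integral {-r..r} (\<lambda>y. of_real (partial_y f2 (x, y)) * E k y)) \<le> K / x\<^sup>2) at_top"
        by (rule qn_HB(2)[OF s2 q2 k])
      show "\<exists>R. \<forall>x. \<bar>x\<bar> > R \<longrightarrow> (\<forall>y. partial_y f (x, y) = partial_y f1 (x, y) + partial_y f2 (x, y))"
      proof (intro exI allI impI)
        fix x y :: real assume x: "\<bar>x\<bar> > R"
        have "(\<lambda>y. f (x, y)) = (\<lambda>y. f1 (x, y) + f2 (x, y))"
        proof
          fix y :: real
          have "norm x \<le> norm (x, y)" by (metis norm_fst_le fst_conv)
          then show "f (x, y) = f1 (x, y) + f2 (x, y)" using x by (intro eq) simp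
        qed
        note feq = this
        have "partial_y f (x, y) = deriv (\<lambda>y. f (x, y)) y" by (simp add: partial_y_def)
        also have "\<dots> = deriv (\<lambda>y. f1 (x, y) + f2 (x, y)) y" by (simp only: feq)
        also have "\<dots> = partial_y f1 (x, y) + partial_y f2 (x, y)" by (rule DERIV_imp_deriv[OF DERIV_add[OF a2 b2]])
        finally show "partial_y f (x, y) = partial_y f1 (x, y) + partial_y f2 (x, y)" .
      qed
    qed
    show ?thesis using HX HY by blast
  qed
  then show "\<exists>R K. \<forall>y. \<bar>y\<bar> > R \<longrightarrow>
        eventually (\<lambda>r. cmod (integral {-r..r} (\<lambda>x. of_real (partial_x f (x, y)) * E k x)) \<le> K / y\<^sup>2) at_top"
    and "\<exists>R K. \<forall>x. \<bar>x\<bar> > R \<longrightarrow>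
        eventually (\<lambda>r. cmod (integral {-r..r} (\<lambda>y. of_real (partial_y f (x, y)) * E k y)) \<le> K / x\<^sup>2) at_top"
    by blast+
qed

theorem lemma11:
  fixes f :: "real \<times> real \<Rightarrow> real"
  assumes "smooth2 f"
    and "quasi_normal f \<or> quasi_split_normal f"
  shows "(\<forall>k1 y. k1 \<noteq> 0 \<longrightarrow> (\<exists>L. ((\<lambda>r. integral {-r..r}
            (\<lambda>x. complex_of_real (f (x, y)) * exp (- \<i> * of_real k1 * of_real x))) \<longlongrightarrow> L) at_top))
       \<and> (\<forall>k2 x. k2 \<noteq> 0 \<longrightarrow> (\<exists>L. ((\<lambda>r. integral {-r..r}
            (\<lambda>y. complex_of_real (f (x, y)) * exp (- \<i> * of_real k2 * of_real y))) \<longlongrightarrow> L) at_top))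
       \<and> (\<forall>k1. k1 \<noteq> 0 \<longrightarrow> (\<exists>C>0. \<forall>y. \<bar>y\<bar> > 1 \<longrightarrow> cmod (FT_x f k1 y) \<le> C / y\<^sup>2))
       \<and> (\<forall>k2. k2 \<noteq> 0 \<longrightarrow> (\<exists>C>0. \<forall>x. \<bar>x\<bar> > 1 \<longrightarrow> cmod (FT_y f x k2) \<le> C / x\<^sup>2))"
proof -
  note sm = assms(1) and q = assms(2)
  obtain D11 D22 where d1: "\<And>x y. ((\<lambda>x. f (x, y)) has_real_derivative partial_x f (x, y)) (at x)"
    and d2: "\<And>x y. ((\<lambda>y. f (x, y)) has_real_derivative partial_y f (x, y)) (at y)"
    and d11: "\<And>x y. ((\<lambda>x. partial_x f (x, y)) has_real_derivative D11 (x, y)) (at x)"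
    and d22: "\<And>x y. ((\<lambda>y. partial_y f (x, y)) has_real_derivative D22 (x, y)) (at y)"
    using smooth_parts[OF sm] by metis
  have cond: "conds_i_to_iv f" using q unfolding quasi_normal_def quasi_split_normal_def by blast
  then have "very_moderate_decrease f" "moderate_decrease (partial_x f)" "moderate_decrease (partial_y f)"
    unfolding conds_i_to_iv_def by blast+
  then obtain C3 Cx Cy where C3: "\<And>x y. x\<^sup>2 + y\<^sup>2 > 1 \<Longrightarrow> \<bar>f (x, y)\<bar> \<le> C3 / sqrt (x\<^sup>2 + y\<^sup>2)"
    and Cx: "\<And>x y. x\<^sup>2 + y\<^sup>2 > 1 \<Longrightarrow> \<bar>partial_x f (x, y)\<bar> \<le> Cx / (x\<^sup>2 + y\<^sup>2)"
    and Cy: "\<And>x y. x\<^sup>2 + y\<^sup>2 > 1 \<Longrightarrow> \<bar>partial_y f (x, y)\<bar> \<le> Cy / (x\<^sup>2 + y\<^sup>2)"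
    using md_bound vmd_bound by metis
  have X: "(\<forall>y. \<exists>L. ((\<lambda>r. integral {-r..r} (\<lambda>x. of_real (f (x, y)) * E k x)) \<longlongrightarrow> L) at_top) \<and>
    (\<exists>C>0. \<forall>y. \<bar>y\<bar> > 1 \<longrightarrow>
        cmod (Lim at_top (\<lambda>r. integral {-r..r} (\<lambda>x. of_real (f (x, y)) * E k x))) \<le> C / y\<^sup>2)"
    if k: "k \<noteq> 0" for k
    by (rule dir_main[of "\<lambda>y x. f (x, y)" "\<lambda>y x. partial_x f (x, y)", OF d1 deriv_cont[OF d11] C3 Cx all_HB(1)[OF sm q k] k])
  have Y: "(\<forall>x. \<exists>L. ((\<lambda>r. integral {-r..r} (\<lambda>y. of_real (f (x, y)) * E k y)) \<longlongrightarrow> L) at_top) \<and>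
    (\<exists>C>0. \<forall>x. \<bar>x\<bar> > 1 \<longrightarrow>
        cmod (Lim at_top (\<lambda>r. integral {-r..r} (\<lambda>y. of_real (f (x, y)) * E k y))) \<le> C / x\<^sup>2)"
    if k: "k \<noteq> 0" for k
  proof (rule dir_main[of "\<lambda>x y. f (x, y)" "\<lambda>x y. partial_y f (x, y)", OF d2 deriv_cont[OF d22] _ _ all_HB(2)[OF sm q k] k])
    fix a b :: real assume "b\<^sup>2 + a\<^sup>2 > 1"
    then show "\<bar>f (a, b)\<bar> \<le> C3 / sqrt (b\<^sup>2 + a\<^sup>2)" using C3[of a b] by (simp add: add.commute)
  next
    fix a b :: real assume "b\<^sup>2 + a\<^sup>2 > 1"
    then show "\<bar>partial_y f (a, b)\<bar> \<le> Cy / (b\<^sup>2 + a\<^sup>2)" using Cy[of a b] by (simp add: add.commute)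
  qed
  have Ed: "E k = (\<lambda>x. exp (- \<i> * of_real k * of_real x))" for k by (rule ext) (simp add: E_def)
  show ?thesis
    unfolding FT_x_def FT_y_def using X Y unfolding Ed by blast
qed


end
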